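(* For a real number $k\ge 1$, let $x_0(k)$ be the unique root of the equation $x-1-x^{\frac{k-1}{k}}=0$ in the interval $[1,\infty)$. Then $2\le x_0(k)<\max(k,e+2)$. *)

theory Defs
  imports Complex_Main
begin

definition x0 :: "real \<Rightarrow> real" where
  "x0 k = (THE x. 1 \<le> x \<and> x - 1 - x powr ((k - 1) / k) = 0)"

end

theory Submission
  imports Defs
begin

lemma key_bound:
  fixes M k :: real
  assumes "k \<ge> 1" "M \<ge> k" "M \<ge> exp 1 + 2"
  shows "M powr ((k - 1) / k) < M - 1"
proof -
  have e0: "exp 1 > (0::real)" by simp
  have M0: "M > 2" using assms e0 by linarith
  have l1: "ln (exp 1 / M) \<le> exp 1 / M - 1" using M0 by (intro ln_le_minus_one) simp
  have "ln (exp 1 / M) = 1 - ln M" using M0 by (simp add: ln_div)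
  hence lnM: "ln M \<ge> 2 - exp 1 / M" using l1 by linarith
  have "(M - 1) * (2 - exp 1 / M) = 2*M - 2 - exp 1 + exp 1 / M"
    using M0 by (simp add: field_simps)
  also have "\<dots> > M"
  proof -
    have "exp 1 / M > 0" using M0 by simp
    thus ?thesis using assms(3) by linarith
  qed
  finally have A: "(M - 1) * (2 - exp 1 / M) > M" .
  have "(M - 1) * ln M \<ge> (M - 1) * (2 - exp 1 / M)"
    using lnM M0 by (intro mult_left_mono) auto
  hence B: "(M - 1) * ln M > k" using A assms by linarith
  have k0: "k > 0" using assms by simp
  have C: "ln M / k > 1 / (M - 1)"
    using B k0 M0 by (simp add: field_simps)
  have "exp (ln M / k) \<ge> 1 + ln M / k" by (rule exp_ge_add_one_self)
  moreover have "1 + 1 / (M - 1) = M / (M - 1)" using M0 by (simp add: field_simps)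
  moreover have "M powr (1/k) = exp (ln M / k)" using M0 by (simp add: powr_def)
  ultimately have D: "M powr (1/k) > M / (M - 1)"
    using C by linarith
  have "M powr ((k - 1) / k) = M powr (1 - 1/k)" using k0 by (simp add: field_simps)
  also have "\<dots> = M / M powr (1/k)" using M0 by (simp add: powr_diff)
  also have "\<dots> < M - 1"
  proof -
    have p: "M powr (1/k) > 0" using M0 by simp
    have "M < (M - 1) * M powr (1/k)" using D M0 by (simp add: field_simps)
    thus ?thesis using p by (simp add: field_simps)
  qed
  finally show ?thesis .
qed

theorem lemma3p2:
  fixes k :: real
  assumes "k \<ge> 1"
  shows "(\<exists>!x. 1 \<le> x \<and> x - 1 - x powr ((k - 1) / k) = 0)
         \<and> 2 \<le> x0 k \<and> x0 k < max k (exp 1 + 2)"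
proof -
  define a where "a = (k - 1) / k"
  have a0: "0 \<le> a" and a1: "a < 1" using assms by (auto simp: a_def field_simps)
  define h where "h x = x powr (1 - a) - x powr (-a)" for x :: real
  have hmono: "h x < h y" if "1 \<le> x" "x < y" for x y
  proof -
    have "x powr (1 - a) < y powr (1 - a)" using that a1 by (intro powr_less_mono2) auto
    moreover have "y powr (-a) \<le> x powr (-a)"
      using that a0 by (intro powr_mono2') auto
    ultimately show ?thesis by (simp add: h_def)
  qed
  have heq: "(x - 1 - x powr a = 0) \<longleftrightarrow> h x = 1" if "1 \<le> x" for x
  proof -
    have p: "x powr a > 0" using that by simp
    have "h x * x powr a = x - 1" using that
      by (simp add: h_def algebra_simps powr_add[symmetric] powr_diff)
    hence "x - 1 - x powr a = 0 \<longleftrightarrow> h x * x powr a = 1 * x powr a" by auto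
    thus ?thesis using p by simp
  qed
  define M where "M = max k (exp 1 + 2)"
  have M0: "M > 2" unfolding M_def by (smt (verit) exp_gt_zero)
  have fM: "M powr a < M - 1" unfolding a_def M_def
    using key_bound[OF assms] by simp
  have hM: "h M > 1"
  proof -
    have p: "M powr a > 0" using M0 by simp
    have "h M * M powr a = M - 1" using M0
      by (simp add: h_def algebra_simps powr_add[symmetric] powr_diff)
    hence "1 * M powr a < h M * M powr a" using fM by simp
    thus ?thesis using p by (simp only: mult_less_cancel_right)
  qed
  have h1: "h 1 = 0" by (simp add: h_def)
  have "\<exists>x\<ge>1. x \<le> M \<and> h x = 1"
  proof (rule IVT)
    show "h 1 \<le> 1" using h1 by simp
    show "1 \<le> h M" using hM by simp
    show "1 \<le> M" using M0 by simp
    show "\<forall>x. 1 \<le> x \<and> x \<le> M \<longrightarrow> isCont h x"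
      unfolding h_def by (auto intro!: continuous_intros)
  qed
  then obtain r where r: "1 \<le> r" "r \<le> M" "h r = 1" by auto
  have uniq: "y = r" if "1 \<le> y" "h y = 1" for y
    using hmono[of y r] hmono[of r y] that r by (cases "y < r"; cases "r < y") auto
  have ex: "\<exists>!x. 1 \<le> x \<and> x - 1 - x powr a = 0"
    using r uniq heq by metis
  have rr: "1 \<le> r \<and> r - 1 - r powr a = 0" using r heq by auto
  have x0r: "x0 k = r" unfolding x0_def a_def[symmetric]
    using ex rr by (metis (mono_tags, lifting) the_equality)
  have "2 \<le> r"
  proof (rule ccontr)
    assume "\<not> 2 \<le> r"
    moreover have "1 \<le> r powr a" using r(1) a0 by (simp add: ge_one_powr_ge_zero)
    ultimately show False using rr by linarith
  qed
  moreover have "r < M"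
    using hM r hmono[of M r] M0 by (cases "r < M") (auto)
  ultimately show ?thesis using ex x0r unfolding a_def M_def by simp
qed

end
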